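(* Let $l$ be odd, $K$ a field of characteristic $0$ and $q\in K$ such that $q^2$ is a primitive $l$-th root of unity. For every $n$ with $2\le n\le l-1$, $$\sum_{i=0}^{l-1}S_{i,n}(1,q^2,q^4,\dots,q^{2(n-1)})=\frac{l}{(1-q^2)(1-q^4)\cdots(1-q^{2(n-1)})},$$ where $S_{d,n}(x_1,\dots,x_n)=\sum_{1\le i_1\le\cdots\le i_d\le n}x_{i_1}\cdots x_{i_d}$ and $S_{0,n}=1$. *)

theory Defs
  imports Main "HOL-Library.FuncSet"
begin

text \<open>Sequences are extensional
  functions {1..d} -> {1..n}; for d = 0 the sum has one empty product, so S_{0,n} = 1.\<close>
definition complete_hom :: "nat \<Rightarrow> nat \<Rightarrow> (nat \<Rightarrow> 'a::comm_ring_1) \<Rightarrow> 'a" where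
  "complete_hom d n x =
     (\<Sum>f \<in> {f. f \<in> {1..d} \<rightarrow>\<^sub>E {1..n} \<and> (\<forall>i\<in>{1..d}. \<forall>j\<in>{1..d}. i \<le> j \<longrightarrow> f i \<le> f j)}.
        \<Prod>k=1..d. x (f k))"

definition primitive_root_of_unity :: "nat \<Rightarrow> 'a::comm_ring_1 \<Rightarrow> bool" where
  "primitive_root_of_unity l z \<longleftrightarrow> 0 < l \<and> z ^ l = 1 \<and> (\<forall>k. 0 < k \<and> k < l \<longrightarrow> z ^ k \<noteq> 1)"

end

theory Submission
  imports Defs
begin

definition MS :: "nat \<Rightarrow> nat \<Rightarrow> (nat \<Rightarrow> nat) set" where
  "MS d n = {f. f \<in> {1..d} \<rightarrow>\<^sub>E {1..n} \<and> (\<forall>i\<in>{1..d}. \<forall>j\<in>{1..d}. i \<le> j \<longrightarrow> f i \<le> f j)}"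

lemma MS_finite: "finite (MS d n)"
  by (rule finite_subset[of _ "{1..d} \<rightarrow>\<^sub>E {1..n}"]) (auto simp: MS_def intro: finite_PiE)

lemma ch_MS: "complete_hom d n x = (\<Sum>f\<in>MS d n. \<Prod>k=1..d. x (f k))"
  by (simp add: complete_hom_def MS_def)

lemma ch_0: "complete_hom 0 n x = 1"
proof -
  have "MS 0 n = {\<lambda>_. undefined}" by (auto simp: MS_def)
  then show ?thesis by (simp add: ch_MS)
qed

lemma ch_Suc_0: "complete_hom (Suc d) 0 x = 0"
proof -
  have "MS (Suc d) 0 = {}" by (auto simp: MS_def PiE_def Pi_def)
  then show ?thesis by (simp add: ch_MS)
qed

lemma MS_split: "MS (Suc d) (Suc n) = MS (Suc d) n \<union> (\<lambda>g. g(Suc d := Suc n)) ` MS d (Suc n)"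
proof
  show "MS (Suc d) (Suc n) \<subseteq> MS (Suc d) n \<union> (\<lambda>g. g(Suc d := Suc n)) ` MS d (Suc n)"
  proof
    fix f assume f: "f \<in> MS (Suc d) (Suc n)"
    show "f \<in> MS (Suc d) n \<union> (\<lambda>g. g(Suc d := Suc n)) ` MS d (Suc n)"
    proof (cases "f (Suc d) = Suc n")
      case True
      let ?g = "f(Suc d := undefined)"
      have "?g \<in> MS d (Suc n)" using f by (auto simp: MS_def PiE_def Pi_def extensional_def)
      moreover have "f = ?g(Suc d := Suc n)" using True by auto
      ultimately show ?thesis by blast
    next
      case False
      have "f (Suc d) \<le> Suc n" using f by (auto simp: MS_def PiE_def Pi_def)
      with False have le: "f (Suc d) \<le> n" by simp
      have "\<forall>k\<in>{1..Suc d}. f k \<le> f (Suc d)" using f by (auto simp: MS_def)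
      with le have "\<forall>k\<in>{1..Suc d}. f k \<le> n" by auto
      then have "f \<in> MS (Suc d) n" using f
        by (auto simp: MS_def PiE_def Pi_def)
      then show ?thesis by blast
    qed
  qed
next
  show "MS (Suc d) n \<union> (\<lambda>g. g(Suc d := Suc n)) ` MS d (Suc n) \<subseteq> MS (Suc d) (Suc n)"
  proof
    fix f assume "f \<in> MS (Suc d) n \<union> (\<lambda>g. g(Suc d := Suc n)) ` MS d (Suc n)"
    then show "f \<in> MS (Suc d) (Suc n)"
    proof
      assume "f \<in> MS (Suc d) n" then show ?thesis by (auto simp: MS_def PiE_def Pi_def)
    next
      assume "f \<in> (\<lambda>g. g(Suc d := Suc n)) ` MS d (Suc n)"
      then obtain g where g: "g \<in> MS d (Suc n)" and fg: "f = g(Suc d := Suc n)" by blast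
      show ?thesis using g unfolding fg MS_def PiE_def Pi_def extensional_def
        by (auto simp: le_Suc_eq)
    qed
  qed
qed

lemma ch_Suc_Suc: "complete_hom (Suc d) (Suc n) x =
   complete_hom (Suc d) n x + x (Suc n) * complete_hom d (Suc n) x"
proof -
  let ?h = "\<lambda>g. g(Suc d := Suc n)"
  have disj: "MS (Suc d) n \<inter> ?h ` MS d (Suc n) = {}"
    by (auto simp: MS_def PiE_def Pi_def)
  have inj: "inj_on ?h (MS d (Suc n))"
  proof (rule inj_onI)
    fix a b assume a: "a \<in> MS d (Suc n)" and b: "b \<in> MS d (Suc n)" and e: "?h a = ?h b"
    have "a (Suc d) = b (Suc d)" using a b by (auto simp: MS_def PiE_def extensional_def)
    then show "a = b" using e by (metis fun_upd_triv fun_upd_upd)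
  qed
  have "complete_hom (Suc d) (Suc n) x = (\<Sum>f\<in>MS (Suc d) n. \<Prod>k=1..Suc d. x (f k))
      + (\<Sum>f\<in>?h ` MS d (Suc n). \<Prod>k=1..Suc d. x (f k))"
    unfolding ch_MS MS_split by (rule sum.union_disjoint) (auto simp: MS_finite disj)
  also have "(\<Sum>f\<in>?h ` MS d (Suc n). \<Prod>k=1..Suc d. x (f k))
      = (\<Sum>g\<in>MS d (Suc n). \<Prod>k=1..Suc d. x (?h g k))"
    by (rule sum.reindex[OF inj, unfolded comp_def])
  also have "\<dots> = (\<Sum>g\<in>MS d (Suc n). x (Suc n) * (\<Prod>k=1..d. x (g k)))"
  proof (rule sum.cong[OF refl])
    fix g
    have "(\<Prod>k=1..Suc d. x (?h g k)) = x (?h g (Suc d)) * (\<Prod>k=1..d. x (?h g k))"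
      by (rule prod.nat_ivl_Suc') simp
    also have "(\<Prod>k=1..d. x (?h g k)) = (\<Prod>k=1..d. x (g k))"
      by (rule prod.cong) auto
    finally show "(\<Prod>k=1..Suc d. x (?h g k)) = x (Suc n) * (\<Prod>k=1..d. x (g k))" by simp
  qed
  also have "\<dots> = x (Suc n) * complete_hom d (Suc n) x"
    by (simp add: ch_MS sum_distrib_left)
  finally show ?thesis by (simp add: ch_MS)
qed

definition HH :: "'a::comm_ring_1 \<Rightarrow> nat \<Rightarrow> nat \<Rightarrow> 'a" where
  "HH z n k = complete_hom k n (\<lambda>j. z ^ (j - 1))"

lemma HH_0: "HH z n 0 = 1" by (simp add: HH_def ch_0)
lemma HH_0n: "HH z 0 (Suc k) = 0" by (simp add: HH_def ch_Suc_0)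
lemma HH_rec: "HH z (Suc n) (Suc k) = HH z n (Suc k) + z ^ n * HH z (Suc n) k"
  by (simp add: HH_def ch_Suc_Suc)

lemma HH_1: "HH z (Suc 0) k = 1"
  by (induction k) (simp_all add: HH_0 HH_0n HH_rec)

lemma HH_k1: "(1 - z) * HH z n (Suc 0) = 1 - z ^ n"
proof (induction n)
  case 0 then show ?case by (simp add: HH_0n)
next
  case (Suc n)
  have "(1 - z) * HH z (Suc n) (Suc 0) = (1 - z) * HH z n (Suc 0) + (1 - z) * z ^ n"
    by (simp add: HH_rec HH_0 algebra_simps)
  also have "\<dots> = 1 - z ^ Suc n" using Suc by (simp add: algebra_simps)
  finally show ?case .
qed

lemma HH_P: "HH z (Suc n) k * (1 - z ^ n) = (1 - z ^ Suc k) * HH z n (Suc k)"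
proof (induction k arbitrary: n)
  case 0 then show ?case using HH_k1[of z n] by (simp add: HH_0)
next
  case (Suc k)
  note IHk = Suc
  show ?case
  proof (induction n)
    case 0 then show ?case by (simp add: HH_0n)
  next
    case (Suc m)
    let ?a = "HH z (Suc (Suc m)) (Suc k)"
    have "HH z (Suc (Suc m)) (Suc k) * (1 - z ^ Suc m)
        = HH z (Suc m) (Suc k) * (1 - z ^ Suc m) + z ^ Suc m * (HH z (Suc (Suc m)) k * (1 - z ^ Suc m))"
      by (simp add: HH_rec algebra_simps)
    also have "\<dots> = HH z (Suc m) (Suc k) * (1 - z ^ Suc m) + z ^ Suc m * ((1 - z ^ Suc k) * HH z (Suc m) (Suc k))"
      using IHk[of "Suc m"] by simp
    also have "\<dots> = HH z (Suc m) (Suc k) * (1 - z ^ (m + k + 2))"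
      by (simp add: algebra_simps power_add)
    finally have L: "?a * (1 - z ^ Suc m) = HH z (Suc m) (Suc k) * (1 - z ^ (m + k + 2))" .
    have "(1 - z ^ Suc (Suc k)) * HH z (Suc m) (Suc (Suc k))
        = (1 - z ^ Suc (Suc k)) * HH z m (Suc (Suc k)) + z ^ m * (1 - z ^ Suc (Suc k)) * HH z (Suc m) (Suc k)"
      by (simp add: HH_rec algebra_simps)
    also have "\<dots> = HH z (Suc m) (Suc k) * (1 - z ^ m) + z ^ m * (1 - z ^ Suc (Suc k)) * HH z (Suc m) (Suc k)"
      using Suc by simp
    also have "\<dots> = HH z (Suc m) (Suc k) * (1 - z ^ (m + k + 2))"
      by (simp add: algebra_simps power_add)
    finally show ?case using L by simp
  qed
qed

lemma AA_rec:
  fixes z :: "'a::comm_ring_1"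
  shows "(\<Sum>i<Suc m. HH z (Suc p) i) = (\<Sum>i<Suc m. HH z p i) + z ^ p * ((\<Sum>i<Suc m. HH z (Suc p) i) - HH z (Suc p) m)"
proof -
  have "(\<Sum>i<Suc m. HH z (Suc p) i) = 1 + (\<Sum>i<m. HH z p (Suc i) + z ^ p * HH z (Suc p) i)"
    by (simp add: sum.lessThan_Suc_shift HH_0 HH_rec del: sum.lessThan_Suc)
  also have "\<dots> = (HH z p 0 + (\<Sum>i<m. HH z p (Suc i))) + z ^ p * (\<Sum>i<m. HH z (Suc p) i)"
    by (simp add: sum.distrib sum_distrib_left HH_0)
  also have "\<dots> = (\<Sum>i<Suc m. HH z p i) + z ^ p * ((\<Sum>i<Suc m. HH z (Suc p) i) - HH z (Suc p) m)"
  proof -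
    have A: "(\<Sum>i<Suc m. HH z (Suc p) i) - HH z (Suc p) m = (\<Sum>i<m. HH z (Suc p) i)" by simp
    have B: "HH z p 0 + (\<Sum>i<m. HH z p (Suc i)) = (\<Sum>i<Suc m. HH z p i)"
      by (simp only: sum.lessThan_Suc_shift)
    show ?thesis by (simp only: A B)
  qed
  finally show ?thesis .
qed

lemma aux_eq: fixes x :: "'a::comm_ring_1" assumes "x = y + c * x" shows "x * (1 - c) = y"
proof -
  have "x * (1 - c) = x - c * x" by (simp add: algebra_simps)
  also have "\<dots> = y" by (subst (1) assms) simp
  finally show ?thesis .
qed

lemma main_aux:
  fixes z :: "'a::field"
  assumes prim: "primitive_root_of_unity l z"
  shows "Suc p \<le> l - 1 \<Longrightarrow> (\<Sum>i<l. HH z (Suc p) i) = of_nat l / (\<Prod>j=1..p. (1 - z ^ j))"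
proof (induction p)
  case 0 then show ?case by (simp add: HH_1)
next
  case (Suc p)
  from prim have l0: "0 < l" and zl: "z ^ l = 1" and nz: "\<And>k. 0 < k \<Longrightarrow> k < l \<Longrightarrow> z ^ k \<noteq> 1"
    by (auto simp: primitive_root_of_unity_def)
  obtain m where lm: "l = Suc m" using l0 by (cases l) auto
  have ne: "1 - z ^ Suc p \<noteq> 0" using nz[of "Suc p"] Suc.prems by auto
  have "HH z (Suc (Suc p)) m * (1 - z ^ Suc p) = (1 - z ^ l) * HH z (Suc p) (Suc m)"
    using HH_P[of z "Suc p" m] lm by simp
  then have h0: "HH z (Suc (Suc p)) m = 0" using zl ne by simp
  let ?A = "\<lambda>n. \<Sum>i<l. HH z n i"
  have "?A (Suc (Suc p)) = ?A (Suc p) + z ^ Suc p * (?A (Suc (Suc p)) - HH z (Suc (Suc p)) m)"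
    unfolding lm by (rule AA_rec)
  then have "?A (Suc (Suc p)) = ?A (Suc p) + z ^ Suc p * ?A (Suc (Suc p))"
    unfolding h0 diff_zero .
  then have e: "?A (Suc (Suc p)) * (1 - z ^ Suc p) = ?A (Suc p)" by (rule aux_eq)
  have IH: "?A (Suc p) = of_nat l / (\<Prod>j=1..p. (1 - z ^ j))" using Suc by simp
  have pr: "(\<Prod>j=1..Suc p. (1 - z ^ j)) = (\<Prod>j=1..p. (1 - z ^ j)) * (1 - z ^ Suc p)"
    by (subst prod.nat_ivl_Suc') (simp_all add: mult.commute)
  have "?A (Suc (Suc p)) = ?A (Suc p) / (1 - z ^ Suc p)"
    using e ne by (simp add: eq_divide_eq)
  then show ?case unfolding pr IH by (simp only: divide_divide_eq_left)
qed

theorem mainTheorem5: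
  fixes q :: "'a::field_char_0" and l n :: nat
  assumes "odd l"
    and "primitive_root_of_unity l (q^2)"
    and "2 \<le> n" and "n \<le> l - 1"
  shows "(\<Sum>i<l. complete_hom i n (\<lambda>j. q ^ (2 * (j - 1))))
         = of_nat l / (\<Prod>j=1..n-1. (1 - q ^ (2 * j)))"
proof -
  obtain p where np: "n = Suc p" using assms(3) by (cases n) auto
  have le: "Suc p \<le> l - 1" using assms(4) np by simp
  have fun_eq: "(\<lambda>j. q ^ (2 * (j - 1))) = (\<lambda>j. (q^2) ^ (j - 1))"
    by (simp only: power_mult)
  have pr_eq: "(\<Prod>j=1..n-1. (1 - q ^ (2 * j))) = (\<Prod>j=1..p. (1 - (q^2) ^ j))"
    unfolding np by (simp only: power_mult diff_Suc_1)
  have "(\<Sum>i<l. complete_hom i n (\<lambda>j. q ^ (2 * (j - 1)))) = of_nat l / (\<Prod>j=1..p. (1 - (q^2) ^ j))"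
    unfolding fun_eq np using main_aux[OF assms(2) le] by (simp only: HH_def)
  then show ?thesis by (simp only: pr_eq)
qed

end
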